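(* Let $G$ be a finite simple graph with $|G|$ vertices and let $s$ be a positive integer. Then \[ \sum_{i=1}^{|G|} \lambda_i(G)^{2s} \le \sum_{v \in V(G)} \lambda_1\bigl(B_G(v,s)\bigr)^{2s}. \]
   Context: For a graph $F$, $\lambda_1(F) \ge \lambda_2(F) \ge \cdots$ denote the eigenvalues of the adjacency matrix of $F$, listed with multiplicity. For a vertex $v$ of $G$ and integer $s \ge 0$, $B_G(v,s)$ denotes the subgraph of $G$ induced by all vertices within graph distance at most $s$ of $v$. *)

theory Defs
  imports "Jordan_Normal_Form.Char_Poly"
begin

text \<open>A finite simple graph is given by a finite vertex set V and a symmetric,
irreflexive adjacency relation E; only edges between vertices of V are used.\<close>

definition vertex_list :: "'a set \<Rightarrow> 'a list" where
  "vertex_list V = (SOME xs. distinct xs \<and> set xs = V)"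

text \<open>Adjacency matrix of the subgraph induced by the vertex set V
(vertices enumerated in some fixed order; the spectrum does not depend on it).\<close>
definition adj_mat :: "('a \<Rightarrow> 'a \<Rightarrow> bool) \<Rightarrow> 'a set \<Rightarrow> real mat" where
  "adj_mat E V = (let vs = vertex_list V in
     mat (length vs) (length vs) (\<lambda>(i, j). if E (vs ! i) (vs ! j) then 1 else 0))"

definition eig_power_sum :: "real mat \<Rightarrow> nat \<Rightarrow> real" where
  "eig_power_sum A k =
     (\<Sum>a\<in>{a. eigenvalue A a}. of_nat (order a (char_poly A)) * a ^ k)"

definition lambda1 :: "real mat \<Rightarrow> real" where
  "lambda1 A = Max {a. eigenvalue A a}"

fun ball_verts :: "('a \<Rightarrow> 'a \<Rightarrow> bool) \<Rightarrow> 'a set \<Rightarrow> 'a \<Rightarrow> nat \<Rightarrow> 'a set" where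
  "ball_verts E V v 0 = {v}"
| "ball_verts E V v (Suc k) =
     ball_verts E V v k \<union> {u \<in> V. \<exists>w \<in> ball_verts E V v k. E w u}"

end

theory Submission
  imports Defs "Jordan_Normal_Form.Schur_Decomposition"
begin

definition mtrace :: "'b::comm_ring_1 mat \<Rightarrow> 'b" where
  "mtrace M = (\<Sum>i<dim_row M. M $$ (i,i))"

lemma order_linear_prod:
  fixes rs :: "'b::idom list"
  shows "Polynomial.order a (\<Prod>r\<leftarrow>rs. [:-r,1:]) = count_list rs a"
proof (induction rs)
  case Nil
  then show ?case by simp
next
  case (Cons r rs)
  have nz: "(\<Prod>r\<leftarrow>rs. [:-r,1:]) \<noteq> 0"
    by (auto simp: prod_list_zero_iff)
  have "Polynomial.order a ([:-r,1:] * (\<Prod>r\<leftarrow>rs. [:-r,1:])) = Polynomial.order a [:-r,1:] + Polynomial.order a (\<Prod>r\<leftarrow>rs. [:-r,1:])"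
    by (rule order_mult) (metis nz mult_eq_0_iff pCons_eq_0_iff one_neq_zero)
  moreover have "Polynomial.order a [:-r,1:] = (if r = a then 1 else 0)"
    using order_power_n_n[of r 1] by (auto simp: order_0I)
  ultimately show ?case using Cons by simp
qed

lemma poly_linear_prod_zero:
  fixes rs :: "'b::idom list"
  shows "poly (\<Prod>r\<leftarrow>rs. [:-r,1:]) a = 0 \<longleftrightarrow> a \<in> set rs"
  by (induction rs) auto


lemma mult_entry:
  assumes "A \<in> carrier_mat n n" "B \<in> carrier_mat n n" "i < n" "j < n"
  shows "(A * B) $$ (i,j) = (\<Sum>k<n. A $$ (i,k) * B $$ (k,j))"
  using assms by (simp add: scalar_prod_def atLeast0LessThan)

lemma mtrace_mult:
  assumes "A \<in> carrier_mat n n" "B \<in> carrier_mat n n"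
  shows "mtrace (A * B) = (\<Sum>i<n. \<Sum>k<n. A $$ (i,k) * B $$ (k,i))"
  unfolding mtrace_def using assms by (simp only: index_mult_mat carrier_matD) (intro sum.cong refl mult_entry, use assms in auto)

lemma mtrace_comm:
  fixes A B :: "'b::comm_ring_1 mat"
  assumes "A \<in> carrier_mat n n" "B \<in> carrier_mat n n"
  shows "mtrace (A * B) = mtrace (B * A)"
  unfolding mtrace_mult[OF assms] mtrace_mult[OF assms(2,1)]
  by (subst sum.swap) (simp add: mult.commute)

lemma mtrace_similar:
  fixes A T :: "'b::comm_ring_1 mat"
  assumes "similar_mat_wit A T P Q" "A \<in> carrier_mat n n"
  shows "mtrace A = mtrace T"
proof -
  note w = similar_mat_witD2[OF assms(2) assms(1)]
  have T: "T \<in> carrier_mat n n" and P: "P \<in> carrier_mat n n" and Q: "Q \<in> carrier_mat n n"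
    and QP: "Q * P = 1\<^sub>m n" and AT: "A = P * T * Q" using w by blast+
  have "mtrace A = mtrace (P * (T * Q))" using AT assoc_mult_mat[OF P T Q] by simp
  also have "\<dots> = mtrace ((T * Q) * P)" by (rule mtrace_comm[of _ n]) (use P T Q in auto)
  also have "(T * Q) * P = T" using assoc_mult_mat[OF T Q P] QP right_mult_one_mat[OF T] by simp
  finally show ?thesis .
qed

lemma upper_tri_mult:
  fixes X Y :: "'b::comm_ring_1 mat"
  assumes X: "X \<in> carrier_mat n n" and Y: "Y \<in> carrier_mat n n"
    and ux: "upper_triangular X" and uy: "upper_triangular Y"
  shows "upper_triangular (X * Y)" "\<And>i. i < n \<Longrightarrow> (X * Y) $$ (i,i) = X $$ (i,i) * Y $$ (i,i)"
proof -
  have x0: "X $$ (i,k) = 0" if "i < n" "k < i" for i k using ux X that unfolding upper_triangular_def by auto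
  have y0: "Y $$ (i,k) = 0" if "i < n" "k < i" for i k using uy Y that unfolding upper_triangular_def by auto
  show "upper_triangular (X * Y)"
    unfolding upper_triangular_def
  proof (intro allI impI)
    fix i j assume i: "i < dim_row (X * Y)" and j: "j < i"
    have "(X * Y) $$ (i,j) = (\<Sum>k<n. X $$ (i,k) * Y $$ (k,j))"
      using i j X Y by (intro mult_entry) auto
    also have "\<dots> = 0"
    proof (rule sum.neutral, intro ballI)
      fix k assume k: "k \<in> {..<n}"
      show "X $$ (i,k) * Y $$ (k,j) = 0"
      proof (cases "k < i")
        case True then show ?thesis using x0 i X by auto
      next
        case False then show ?thesis using y0[of k j] k j by auto
      qed
    qed
    finally show "(X * Y) $$ (i,j) = 0" .
  qed
  fix i assume i: "i < n"
  have "(X * Y) $$ (i,i) = (\<Sum>k<n. X $$ (i,k) * Y $$ (k,i))"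
    using i X Y by (intro mult_entry) auto
  also have "\<dots> = X $$ (i,i) * Y $$ (i,i)"
  proof -
    have "(\<Sum>k<n. X $$ (i,k) * Y $$ (k,i)) = X $$ (i,i) * Y $$ (i,i) + (\<Sum>k\<in>{..<n}-{i}. X $$ (i,k) * Y $$ (k,i))"
      using i by (subst sum.remove[of _ i]) auto
    also have "(\<Sum>k\<in>{..<n}-{i}. X $$ (i,k) * Y $$ (k,i)) = 0"
    proof (rule sum.neutral, intro ballI)
      fix k assume k: "k \<in> {..<n}-{i}"
      show "X $$ (i,k) * Y $$ (k,i) = 0"
      proof (cases "k < i")
        case True then show ?thesis using x0 i by auto
      next
        case False then show ?thesis using y0[of k i] k by auto
      qed
    qed
    finally show ?thesis by simp
  qed
  finally show "(X * Y) $$ (i,i) = X $$ (i,i) * Y $$ (i,i)" .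
qed

lemma upper_tri_pow:
  fixes T :: "'b::comm_ring_1 mat"
  assumes T: "T \<in> carrier_mat n n" and ut: "upper_triangular T"
  shows "upper_triangular (T ^\<^sub>m m) \<and> (\<forall>i<n. (T ^\<^sub>m m) $$ (i,i) = (T $$ (i,i)) ^ m)"
proof (induction m)
  case 0
  then show ?case using T by (auto simp: upper_triangular_def)
next
  case (Suc m)
  have Tm: "T ^\<^sub>m m \<in> carrier_mat n n" using T by simp
  have ih1: "upper_triangular (T ^\<^sub>m m)" and ih2: "\<And>i. i < n \<Longrightarrow> (T ^\<^sub>m m) $$ (i,i) = (T $$ (i,i)) ^ m"
    using Suc.IH by auto
  note um = upper_tri_mult[OF Tm T ih1 ut]
  have "upper_triangular (T ^\<^sub>m Suc m)" using um(1) by (simp only: pow_mat.simps)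
  moreover have "(T ^\<^sub>m Suc m) $$ (i,i) = (T $$ (i,i)) ^ Suc m" if "i < n" for i
    using um(2)[OF that] ih2[OF that] by (simp only: pow_mat.simps power_Suc2)
  ultimately show ?case by blast
qed


lemma herm_eig_real:
  fixes B :: "real mat" and a :: complex
  assumes B: "B \<in> carrier_mat n n" and sym: "\<And>i j. i < n \<Longrightarrow> j < n \<Longrightarrow> B $$ (i,j) = B $$ (j,i)"
    and ev: "eigenvalue (map_mat complex_of_real B) a"
  shows "Im a = 0"
proof -
  let ?Bc = "map_mat complex_of_real B"
  from ev obtain v where v: "eigenvector ?Bc v a" unfolding eigenvalue_def by auto
  hence vc: "v \<in> carrier_vec n" and v0: "v \<noteq> 0\<^sub>v n" and eq: "?Bc *\<^sub>v v = a \<cdot>\<^sub>v v"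
    using B unfolding eigenvector_def by auto
  have row: "(\<Sum>j<n. of_real (B $$ (i,j)) * v $ j) = a * v $ i" if i: "i < n" for i
  proof -
    have "(?Bc *\<^sub>v v) $ i = a * v $ i" using arg_cong[OF eq, of "\<lambda>w. w $ i"] i vc by simp
    moreover have "(?Bc *\<^sub>v v) $ i = (\<Sum>j<n. of_real (B $$ (i,j)) * v $ j)"
      using i B vc by (auto simp: scalar_prod_def atLeast0LessThan intro!: sum.cong)
    ultimately show ?thesis by simp
  qed
  define q where "q = (\<Sum>i<n. \<Sum>j<n. cnj (v $ i) * of_real (B $$ (i,j)) * v $ j)"
  define R where "R = (\<Sum>i<n. (Re (v $ i))\<^sup>2 + (Im (v $ i))\<^sup>2)"
  have "q = (\<Sum>i<n. cnj (v $ i) * (a * v $ i))"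
    unfolding q_def by (rule sum.cong[OF refl]) (simp add: row[symmetric] sum_distrib_left mult.assoc)
  also have "\<dots> = a * (\<Sum>i<n. v $ i * cnj (v $ i))"
    by (simp add: sum_distrib_left mult_ac)
  also have "\<dots> = a * of_real R"
    unfolding R_def by (simp add: complex_mult_cnj)
  finally have qa: "q = a * of_real R" .
  have "cnj q = (\<Sum>i<n. \<Sum>j<n. v $ i * of_real (B $$ (i,j)) * cnj (v $ j))"
    unfolding q_def by simp
  also have "\<dots> = (\<Sum>j<n. \<Sum>i<n. v $ i * of_real (B $$ (i,j)) * cnj (v $ j))"
    by (rule sum.swap)
  also have "\<dots> = q"
    unfolding q_def
    by (intro sum.cong refl) (simp add: sym mult_ac)
  finally have "cnj q = q" .
  hence "Im (cnj q) = Im q" by simp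
  hence "Im q = 0" by simp
  hence imR: "Im a * R = 0" using qa by simp
  obtain i where i: "i < n" and vi: "v $ i \<noteq> 0"
  proof -
    have "\<exists>i<n. v $ i \<noteq> 0"
    proof (rule ccontr)
      assume "\<not> ?thesis"
      hence "v = 0\<^sub>v n" using vc by (intro eq_vecI) auto
      with v0 show False by simp
    qed
    thus ?thesis using that by blast
  qed
  have "0 < (Re (v $ i))\<^sup>2 + (Im (v $ i))\<^sup>2" using vi
    by (auto simp: sum_power2_gt_zero_iff complex_eq_iff)
  moreover have "(Re (v $ i))\<^sup>2 + (Im (v $ i))\<^sup>2 \<le> R"
    unfolding R_def using i by (intro member_le_sum) auto
  ultimately have "R > 0" by linarith
  with imR show ?thesis by simp
qed


lemma real_sym_factor:
  fixes B :: "real mat"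
  assumes B: "B \<in> carrier_mat n n" and sym: "\<And>i j. i < n \<Longrightarrow> j < n \<Longrightarrow> B $$ (i,j) = B $$ (j,i)"
  shows "\<exists>rs. char_poly B = (\<Prod>r\<leftarrow>rs. [:-r,1:]) \<and> length rs = n"
proof -
  let ?Bc = "map_mat complex_of_real B"
  have Bc: "?Bc \<in> carrier_mat n n" using B by simp
  obtain as where cp: "char_poly ?Bc = (\<Prod>a\<leftarrow>as. [:-a,1:])" and len: "length as = n"
    using char_poly_factorized[OF Bc] by blast
  have re: "complex_of_real (Re a) = a" if "a \<in> set as" for a
  proof -
    have "poly (char_poly ?Bc) a = 0" using that unfolding cp poly_linear_prod_zero .
    hence "eigenvalue ?Bc a" using eigenvalue_root_char_poly[OF Bc] by simp
    hence "Im a = 0" using herm_eig_real[OF B] sym by blast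
    thus ?thesis by (simp add: complex_eq_iff)
  qed
  define rs where "rs = map Re as"
  have asr: "map complex_of_real rs = as" unfolding rs_def map_map
    by (rule map_idI) (use re in auto)
  interpret mp: map_poly_inj_idom_hom "complex_of_real" ..
  have "map_poly complex_of_real (char_poly B) = char_poly ?Bc"
    by (rule of_real_hom.char_poly_hom[OF B, symmetric])
  also have "\<dots> = map_poly complex_of_real (\<Prod>r\<leftarrow>rs. [:-r,1:])"
    unfolding cp asr[symmetric] by (simp add: mp.hom_prod_list o_def)
  finally have "char_poly B = (\<Prod>r\<leftarrow>rs. [:-r,1:])" by (rule mp.injectivity)
  thus ?thesis using len by (intro exI[of _ rs]) (simp add: rs_def)
qed

lemma sum_list_count:
  fixes f :: "'b \<Rightarrow> real"
  shows "sum_list (map f xs) = (\<Sum>a\<in>set xs. of_nat (count_list xs a) * f a)"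
proof (induction xs)
  case Nil
  then show ?case by simp
next
  case (Cons x xs)
  have "(\<Sum>a\<in>set (x#xs). of_nat (count_list (x#xs) a) * f a)
     = (\<Sum>a\<in>insert x (set xs). of_nat (count_list xs a) * f a + (if a = x then f a else 0))"
    by (intro sum.cong) (auto simp: algebra_simps)
  also have "\<dots> = (\<Sum>a\<in>insert x (set xs). of_nat (count_list xs a) * f a) + f x"
    by (simp add: sum.distrib sum.delta)
  also have "(\<Sum>a\<in>insert x (set xs). of_nat (count_list xs a) * f a) = (\<Sum>a\<in>set xs. of_nat (count_list xs a) * f a)"
    by (cases "x \<in> set xs") (auto simp: insert_absorb)
  finally show ?case using Cons by simp
qed

lemma eig_sum_trace:
  fixes B :: "real mat"
  assumes B: "B \<in> carrier_mat n n" and cp: "char_poly B = (\<Prod>r\<leftarrow>rs. [:-r,1:])"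
  shows "{a. eigenvalue B a} = set rs" "eig_power_sum B k = mtrace (B ^\<^sub>m k)"
    "mtrace (B ^\<^sub>m k) = (\<Sum>r\<leftarrow>rs. r ^ k)"
proof -
  show ev: "{a. eigenvalue B a} = set rs"
    using eigenvalue_root_char_poly[OF B] cp poly_linear_prod_zero by auto
  obtain T P Q where sd: "schur_decomposition B rs = (T,P,Q)" by (cases "schur_decomposition B rs") auto
  from schur_decomposition[OF B cp sd] have w: "similar_mat_wit B T P Q"
    and ut: "upper_triangular T" and dg: "diag_mat T = rs" by auto
  have T: "T \<in> carrier_mat n n" using similar_mat_witD2[OF B w] by blast
  have "mtrace (B ^\<^sub>m k) = mtrace (T ^\<^sub>m k)"
    by (rule mtrace_similar[OF similar_mat_wit_pow[OF w], where n=n]) (use B in simp)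
  also have "\<dots> = (\<Sum>i<n. (T $$ (i,i)) ^ k)"
    unfolding mtrace_def using upper_tri_pow[OF T ut, of k] T by simp
  also have "\<dots> = (\<Sum>r\<leftarrow>rs. r ^ k)"
    unfolding dg[symmetric] diag_mat_def using T
    by (simp add: sum_set_upt_conv_sum_list_nat[symmetric] atLeast0LessThan o_def)
  finally show tr: "mtrace (B ^\<^sub>m k) = (\<Sum>r\<leftarrow>rs. r ^ k)" .
  have "eig_power_sum B k = (\<Sum>a\<in>set rs. of_nat (count_list rs a) * a ^ k)"
    unfolding eig_power_sum_def ev cp order_linear_prod ..
  also have "\<dots> = (\<Sum>r\<leftarrow>rs. r ^ k)"
    by (rule sum_list_count[symmetric])
  finally show "eig_power_sum B k = mtrace (B ^\<^sub>m k)" using tr by simp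
qed


lemma pow_mat_add:
  assumes A: "A \<in> carrier_mat n n"
  shows "A ^\<^sub>m (a + b) = A ^\<^sub>m a * A ^\<^sub>m b"
proof (induction b)
  case 0
  then show ?case using A by simp
next
  case (Suc b)
  have "A ^\<^sub>m (a + Suc b) = (A ^\<^sub>m a * A ^\<^sub>m b) * A" using Suc by simp
  also have "\<dots> = A ^\<^sub>m a * (A ^\<^sub>m b * A)"
    by (rule assoc_mult_mat[of _ n n _ n _ n]) (use A in auto)
  finally show ?case by simp
qed

lemma pow_nonneg:
  fixes B :: "real mat"
  assumes B: "B \<in> carrier_mat n n" and nn: "\<And>i j. i < n \<Longrightarrow> j < n \<Longrightarrow> B $$ (i,j) \<ge> 0"
  shows "i < n \<Longrightarrow> j < n \<Longrightarrow> (B ^\<^sub>m m) $$ (i,j) \<ge> 0"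
proof (induction m arbitrary: i j)
  case 0
  then show ?case using B by simp
next
  case (Suc m)
  have "(B ^\<^sub>m Suc m) $$ (i,j) = (\<Sum>k<n. (B ^\<^sub>m m) $$ (i,k) * B $$ (k,j))"
    using Suc.prems B by (simp only: pow_mat.simps) (rule mult_entry, auto)
  also have "\<dots> \<ge> 0" using Suc nn by (intro sum_nonneg mult_nonneg_nonneg) auto
  finally show ?case .
qed

lemma diag_le_trace:
  fixes B :: "real mat"
  assumes B: "B \<in> carrier_mat n n" and nn: "\<And>i j. i < n \<Longrightarrow> j < n \<Longrightarrow> B $$ (i,j) \<ge> 0"
    and i: "i < n"
  shows "(B ^\<^sub>m m) $$ (i,i) \<le> mtrace (B ^\<^sub>m m)" "mtrace (B ^\<^sub>m m) \<ge> 0"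
proof -
  have eq: "mtrace (B ^\<^sub>m m) = (\<Sum>j<n. (B ^\<^sub>m m) $$ (j,j))" unfolding mtrace_def using B by simp
  show "(B ^\<^sub>m m) $$ (i,i) \<le> mtrace (B ^\<^sub>m m)" unfolding eq
    by (rule member_le_sum[where f="\<lambda>j. (B ^\<^sub>m m) $$ (j,j)"]) (use i pow_nonneg[OF B nn] in auto)
  show "mtrace (B ^\<^sub>m m) \<ge> 0" unfolding eq
    by (rule sum_nonneg) (use pow_nonneg[OF B nn] in auto)
qed

lemma diag_pow_ge:
  fixes B :: "real mat"
  assumes B: "B \<in> carrier_mat n n" and nn: "\<And>i j. i < n \<Longrightarrow> j < n \<Longrightarrow> B $$ (i,j) \<ge> 0"
    and i: "i < n"
  shows "((B ^\<^sub>m p) $$ (i,i)) ^ k \<le> (B ^\<^sub>m (p * k)) $$ (i,i)"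
proof (induction k)
  case 0
  then show ?case using B i by simp
next
  case (Suc k)
  let ?x = "(B ^\<^sub>m p) $$ (i,i)"
  have x0: "?x \<ge> 0" using pow_nonneg[OF B nn i i] .
  have "?x ^ Suc k = ?x ^ k * ?x" by simp
  also have "\<dots> \<le> (B ^\<^sub>m (p * k)) $$ (i,i) * ?x"
    using Suc x0 by (rule mult_right_mono)
  also have "\<dots> \<le> (\<Sum>j<n. (B ^\<^sub>m (p * k)) $$ (i,j) * (B ^\<^sub>m p) $$ (j,i))"
    by (rule member_le_sum[where f="\<lambda>j. (B ^\<^sub>m (p * k)) $$ (i,j) * (B ^\<^sub>m p) $$ (j,i)"])
       (use i pow_nonneg[OF B nn] in \<open>auto intro: mult_nonneg_nonneg\<close>)
  also have "\<dots> = (B ^\<^sub>m (p * k) * B ^\<^sub>m p) $$ (i,i)"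
    by (rule mult_entry[symmetric]) (use B i in auto)
  also have "B ^\<^sub>m (p * k) * B ^\<^sub>m p = B ^\<^sub>m (p * Suc k)"
    using pow_mat_add[OF B, of "p * k" p] by (simp add: add.commute)
  finally show ?case .
qed


lemma term_bound:
  fixes R L :: real and m :: nat
  assumes "R \<le> L" "L > 0"
  shows "R ^ (2 * m) * (L + R) \<le> 2 * L ^ (2 * m + 1)"
proof (cases "L + R \<le> 0")
  case True
  have "R ^ (2 * m) \<ge> 0" by (simp add: zero_le_even_power)
  hence "R ^ (2 * m) * (L + R) \<le> 0" using True by (simp add: mult_nonneg_nonpos)
  also have "0 \<le> 2 * L ^ (2 * m + 1)" using assms by simp
  finally show ?thesis .
next
  case False
  hence "\<bar>R\<bar> \<le> L" using assms by auto
  hence "\<bar>R\<bar> ^ (2 * m) \<le> L ^ (2 * m)" by (rule power_mono) simp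
  hence p: "R ^ (2 * m) \<le> L ^ (2 * m)" by (simp add: power_even_abs)
  have "R ^ (2 * m) * (L + R) \<le> L ^ (2 * m) * (2 * L)"
    using False assms p by (intro mult_mono) (auto simp: zero_le_even_power)
  also have "\<dots> = 2 * L ^ (2 * m + 1)" by simp
  finally show ?thesis .
qed

lemma diag_bound:
  fixes B :: "real mat"
  assumes B: "B \<in> carrier_mat n n" and sym: "\<And>i j. i < n \<Longrightarrow> j < n \<Longrightarrow> B $$ (i,j) = B $$ (j,i)"
    and nn: "\<And>i j. i < n \<Longrightarrow> j < n \<Longrightarrow> B $$ (i,j) \<ge> 0"
    and i: "i < n" and s: "s > 0"
  shows "(B ^\<^sub>m (2 * s)) $$ (i,i) \<le> lambda1 B ^ (2 * s)"
proof -
  obtain rs where cp: "char_poly B = (\<Prod>r\<leftarrow>rs. [:-r,1:])" and len: "length rs = n"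
    using real_sym_factor[OF B sym] by blast
  note es = eig_sum_trace[OF B cp]
  define R where "R j = rs ! j" for j
  have tr: "mtrace (B ^\<^sub>m m) = (\<Sum>j<n. R j ^ m)" for m
    unfolding es(3) R_def using len
    by (simp add: sum_list_sum_nth atLeast0LessThan)
  define L where "L = lambda1 B"
  have rsne: "rs \<noteq> []" using len i by auto
  have L: "L = Max (set rs)" unfolding L_def lambda1_def es(1) ..
  have RL: "R j \<le> L" if "j < n" for j unfolding L R_def using that len by auto
  obtain j0 where j0: "j0 < n" "R j0 = L"
    using Max_in[of "set rs"] rsne unfolding L[symmetric] R_def by (metis List.finite_set in_set_conv_nth len set_empty)
  define x where "x = (B ^\<^sub>m (2 * s)) $$ (i,i)"
  have x0: "x \<ge> 0" unfolding x_def using pow_nonneg[OF B nn i i] .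
  have xtr: "x \<le> mtrace (B ^\<^sub>m (2 * s))" unfolding x_def by (rule diag_le_trace(1)[OF B nn i])
  show ?thesis
  proof (cases "L > 0")
    case False
    have "mtrace (B ^\<^sub>m 1) \<ge> 0" by (rule diag_le_trace(2)[OF B nn i])
    hence "(\<Sum>j<n. - R j) \<le> 0" unfolding tr by (simp add: sum_negf)
    moreover have "\<forall>j\<in>{..<n}. 0 \<le> - R j" using RL False by force
    ultimately have "\<forall>j\<in>{..<n}. - R j = 0"
      using sum_nonneg_eq_0_iff[of "{..<n}" "\<lambda>j. - R j"] sum_nonneg[of "{..<n}" "\<lambda>j. - R j"] by auto
    hence R0: "\<And>j. j < n \<Longrightarrow> R j = 0" by auto
    have "x \<le> (\<Sum>j<n. R j ^ (2 * s))" using xtr tr by simp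
    also have "\<dots> = 0" using R0 s by simp
    also have "0 = L ^ (2 * s)" using R0[OF j0(1)] j0(2) s by simp
    finally show ?thesis unfolding x_def L_def .
  next
    case True
    have bnd: "x ^ k \<le> 2 * real n * L ^ (2 * s * k)" for k
    proof -
      define m where "m = s * k"
      have m: "2 * s * k = 2 * m" unfolding m_def by simp
      have "L * x ^ k \<le> L * (B ^\<^sub>m (2 * m)) $$ (i,i)"
        using diag_pow_ge[OF B nn i, of "2 * s" k] True unfolding x_def m by simp
      also have "\<dots> \<le> L * mtrace (B ^\<^sub>m (2 * m))"
        using diag_le_trace(1)[OF B nn i, of "2 * m"] True by simp
      also have "\<dots> \<le> L * mtrace (B ^\<^sub>m (2 * m)) + mtrace (B ^\<^sub>m (2 * m + 1))"
        using diag_le_trace(2)[OF B nn i, of "2 * m + 1"] by linarith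
      also have "\<dots> = (\<Sum>j<n. R j ^ (2 * m) * (L + R j))"
        unfolding tr sum_distrib_left sum.distrib[symmetric]
      proof (intro sum.cong refl)
        fix j
        show "L * R j ^ (2 * m) + R j ^ (2 * m + 1) = R j ^ (2 * m) * (L + R j)"
          by (simp add: ring_distribs)
      qed
      also have "\<dots> \<le> (\<Sum>j<n. 2 * L ^ (2 * m + 1))"
        by (rule sum_mono) (use RL True term_bound in auto)
      also have "\<dots> = L * (2 * real n * L ^ (2 * m))" by simp
      finally show ?thesis using True unfolding m by simp
    qed
    show ?thesis
    proof (rule ccontr)
      assume "\<not> ?thesis"
      hence gt: "x > L ^ (2 * s)" unfolding x_def L_def by simp
      have Lp: "L ^ (2 * s) > 0" using True by simp
      define y where "y = x / L ^ (2 * s)"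
      have y1: "y > 1" unfolding y_def using gt Lp by simp
      obtain k where k: "2 * real n < y ^ k" using real_arch_pow[OF y1] by blast
      have "y ^ k = x ^ k / L ^ (2 * s * k)" unfolding y_def by (simp add: power_divide power_mult)
      also have "\<dots> \<le> 2 * real n" using bnd[of k] True by (simp add: divide_le_eq)
      finally show False using k by simp
    qed
  qed
qed


lemma vertex_list:
  assumes "finite V"
  shows "distinct (vertex_list V)" "set (vertex_list V) = V"
proof -
  have "\<exists>xs. distinct xs \<and> set xs = V" using finite_distinct_list[OF assms] by blast
  from someI_ex[OF this] show "distinct (vertex_list V)" "set (vertex_list V) = V"
    unfolding vertex_list_def by auto
qed

lemma adj_mat_carrier: "adj_mat E V \<in> carrier_mat (length (vertex_list V)) (length (vertex_list V))"
  unfolding adj_mat_def Let_def by simp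

lemma adj_mat_entry:
  "i < length (vertex_list V) \<Longrightarrow> j < length (vertex_list V) \<Longrightarrow>
   adj_mat E V $$ (i,j) = (if E (vertex_list V ! i) (vertex_list V ! j) then 1 else 0)"
  unfolding adj_mat_def Let_def by simp

lemma sum_distinct_list:
  assumes "distinct vs"
  shows "(\<Sum>x\<in>set vs. f x) = (\<Sum>k<length vs. f (vs ! k))"
proof -
  have "(\<Sum>x\<in>set vs. f x) = sum_list (map f vs)" using assms by (rule sum.distinct_set_conv_list)
  also have "\<dots> = (\<Sum>k<length vs. f (vs ! k))"
    by (simp add: sum_list_sum_nth atLeast0LessThan)
  finally show ?thesis .
qed

fun W :: "('a \<Rightarrow> 'a \<Rightarrow> bool) \<Rightarrow> 'a set \<Rightarrow> nat \<Rightarrow> 'a \<Rightarrow> 'a \<Rightarrow> real" where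
  "W E V 0 u w = (if u = w then 1 else 0)"
| "W E V (Suc m) u w = (\<Sum>x\<in>V. W E V m u x * (if E x w then 1 else 0))"

lemma adj_pow_W:
  assumes V: "finite V" and i: "i < length (vertex_list V)" and j: "j < length (vertex_list V)"
  shows "(adj_mat E V ^\<^sub>m m) $$ (i,j) = W E V m (vertex_list V ! i) (vertex_list V ! j)"
  using j
proof (induction m arbitrary: j)
  case 0
  have "vertex_list V ! i = vertex_list V ! j \<longleftrightarrow> i = j"
    using nth_eq_iff_index_eq[OF vertex_list(1)[OF V] i 0] .
  then show ?case using i 0 adj_mat_carrier[of E V] by simp
next
  case (Suc m)
  let ?vs = "vertex_list V"
  let ?N = "length ?vs"
  have "(adj_mat E V ^\<^sub>m Suc m) $$ (i,j) = (\<Sum>k<?N. (adj_mat E V ^\<^sub>m m) $$ (i,k) * adj_mat E V $$ (k,j))"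
    by (simp only: pow_mat.simps) (rule mult_entry[OF pow_carrier_mat[OF adj_mat_carrier] adj_mat_carrier i Suc.prems])
  also have "\<dots> = (\<Sum>k<?N. W E V m (?vs ! i) (?vs ! k) * (if E (?vs ! k) (?vs ! j) then 1 else 0))"
  proof (intro sum.cong refl)
    fix k assume "k \<in> {..<?N}"
    hence k: "k < ?N" by simp
    show "(adj_mat E V ^\<^sub>m m) $$ (i,k) * adj_mat E V $$ (k,j) = W E V m (?vs ! i) (?vs ! k) * (if E (?vs ! k) (?vs ! j) then 1 else 0)"
      using Suc.IH[OF k] adj_mat_entry[OF k Suc.prems, of E] by simp
  qed
  also have "\<dots> = (\<Sum>x\<in>set ?vs. W E V m (?vs ! i) x * (if E x (?vs ! j) then 1 else 0))"
    by (rule sum_distinct_list[OF vertex_list(1)[OF V], symmetric])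
  also have "\<dots> = W E V (Suc m) (?vs ! i) (?vs ! j)"
    using vertex_list(2)[OF V] by simp
  finally show ?case .
qed

lemma trace_W:
  assumes V: "finite V"
  shows "mtrace (adj_mat E V ^\<^sub>m m) = (\<Sum>u\<in>V. W E V m u u)"
proof -
  let ?vs = "vertex_list V"
  have "mtrace (adj_mat E V ^\<^sub>m m) = (\<Sum>k<length ?vs. (adj_mat E V ^\<^sub>m m) $$ (k,k))"
    unfolding mtrace_def using adj_mat_carrier[of E V] by simp
  also have "\<dots> = (\<Sum>k<length ?vs. W E V m (?vs ! k) (?vs ! k))"
    by (intro sum.cong refl) (use adj_pow_W[OF V] in auto)
  also have "\<dots> = (\<Sum>u\<in>V. W E V m u u)"
    using sum_distinct_list[OF vertex_list(1)[OF V], of "\<lambda>u. W E V m u u"] vertex_list(2)[OF V] by simp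
  finally show ?thesis .
qed

lemma ball_mono_Suc: "ball_verts E V v k \<subseteq> ball_verts E V v (Suc k)"
  by auto

lemma ball_mono: "a \<le> b \<Longrightarrow> ball_verts E V v a \<subseteq> ball_verts E V v b"
proof (induction b)
  case 0
  then show ?case by simp
next
  case (Suc b)
  then show ?case using ball_mono_Suc[of E V v b] by (cases "a = Suc b") auto
qed

lemma ball_sub: "v \<in> V \<Longrightarrow> ball_verts E V v k \<subseteq> V"
  by (induction k) auto

lemma ball_step:
  assumes sym: "\<And>u v. E u v \<Longrightarrow> E v u"
  shows "w \<in> ball_verts E V v b \<Longrightarrow> x \<in> V \<Longrightarrow> E x w \<Longrightarrow> x \<in> ball_verts E V v (Suc b)"
  using sym by auto

lemma W_reach:
  "x \<in> V \<Longrightarrow> W E V m v x \<noteq> 0 \<Longrightarrow> x \<in> ball_verts E V v m"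
proof (induction m arbitrary: x)
  case 0
  then show ?case by (simp split: if_splits)
next
  case (Suc m)
  from Suc.prems(2) obtain y where y: "y \<in> V" "W E V m v y * (if E y x then 1 else 0) \<noteq> 0"
    by (auto elim: sum.not_neutral_contains_not_neutral)
  hence "W E V m v y \<noteq> 0" "E y x" by (auto split: if_splits)
  with Suc.IH[OF y(1)] Suc.prems(1) show ?case by auto
qed


lemma W_ball:
  assumes sym: "\<And>u v. E u v \<Longrightarrow> E v u" and v: "v \<in> V" and V: "finite V"
  shows "w \<in> V \<Longrightarrow> w \<in> ball_verts E V v b \<Longrightarrow> m + b \<le> 2 * s \<Longrightarrow>
         W E V m v w = W E (ball_verts E V v s) m v w"
proof (induction m arbitrary: w b)
  case 0
  then show ?case by simp
next
  case (Suc m)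
  let ?S = "ball_verts E V v s"
  let ?f = "\<lambda>x. W E V m v x * (if E x w then 1 else 0)"
  have SV: "?S \<subseteq> V" by (rule ball_sub[OF v])
  have "W E V (Suc m) v w = sum ?f V" by simp
  also have "\<dots> = sum ?f (V - ?S) + sum ?f ?S" by (rule sum.subset_diff[OF SV V])
  also have "sum ?f (V - ?S) = 0"
  proof (rule sum.neutral, intro ballI)
    fix x assume x: "x \<in> V - ?S"
    show "?f x = 0"
    proof (cases "E x w")
      case False then show ?thesis by simp
    next
      case True
      have xb: "x \<in> ball_verts E V v (Suc b)" using ball_step[OF sym Suc.prems(2)] x True by blast
      have "\<not> Suc b \<le> s" using ball_mono[of "Suc b" s E V v] xb x by blast
      hence "m \<le> s" using Suc.prems(3) by simp
      have "W E V m v x = 0"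
      proof (rule ccontr)
        assume "W E V m v x \<noteq> 0"
        hence xm: "x \<in> ball_verts E V v m" by (intro W_reach) (use x in auto)
        have "ball_verts E V v m \<subseteq> ?S" by (rule ball_mono[OF \<open>m \<le> s\<close>])
        with xm x show False by blast
      qed
      then show ?thesis by simp
    qed
  qed
  also have "sum ?f ?S = (\<Sum>x\<in>?S. W E ?S m v x * (if E x w then 1 else 0))"
  proof (intro sum.cong refl)
    fix x assume x: "x \<in> ?S"
    show "?f x = W E ?S m v x * (if E x w then 1 else 0)"
    proof (cases "E x w")
      case True
      have xb: "x \<in> ball_verts E V v (Suc b)" using ball_step[OF sym Suc.prems(2)] x SV True by blast
      have "W E V m v x = W E ?S m v x"
        by (rule Suc.IH[OF _ xb]) (use x SV Suc.prems(3) in auto)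
      then show ?thesis by simp
    qed simp
  qed
  also have "\<dots> = W E ?S (Suc m) v w" by simp
  finally show ?case by simp
qed

theorem lemma7:
  fixes V :: "'a set" and E :: "'a \<Rightarrow> 'a \<Rightarrow> bool" and s :: nat
  assumes "finite V"
    and "\<And>u v. E u v \<Longrightarrow> E v u"
    and "\<And>v. \<not> E v v"
    and "s > 0"
  shows "eig_power_sum (adj_mat E V) (2 * s)
           \<le> (\<Sum>v\<in>V. lambda1 (adj_mat E (ball_verts E V v s)) ^ (2 * s))"
proof -
  note V = assms(1) and sym = assms(2) and s = assms(4)
  have adj_sym: "adj_mat E U $$ (i,j) = adj_mat E U $$ (j,i)"
    if "i < length (vertex_list U)" "j < length (vertex_list U)" for U i j
    using adj_mat_entry[OF that] adj_mat_entry[OF that(2,1)] sym by auto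
  have adj_nn: "adj_mat E U $$ (i,j) \<ge> 0"
    if "i < length (vertex_list U)" "j < length (vertex_list U)" for U i j
    using adj_mat_entry[OF that] by simp
  obtain rs where cp: "char_poly (adj_mat E V) = (\<Prod>r\<leftarrow>rs. [:-r,1:])"
    using real_sym_factor[OF adj_mat_carrier adj_sym] by blast
  have "eig_power_sum (adj_mat E V) (2 * s) = mtrace (adj_mat E V ^\<^sub>m (2 * s))"
    by (rule eig_sum_trace(2)[OF adj_mat_carrier cp])
  also have "\<dots> = (\<Sum>u\<in>V. W E V (2 * s) u u)" by (rule trace_W[OF V])
  also have "\<dots> \<le> (\<Sum>v\<in>V. lambda1 (adj_mat E (ball_verts E V v s)) ^ (2 * s))"
  proof (rule sum_mono)
    fix u assume u: "u \<in> V"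
    let ?S = "ball_verts E V u s"
    have SV: "?S \<subseteq> V" by (rule ball_sub[OF u])
    have Sf: "finite ?S" using finite_subset[OF SV V] .
    have uS: "u \<in> ?S" using ball_mono[of 0 s E V u] by auto
    have "W E V (2 * s) u u = W E ?S (2 * s) u u"
      by (rule W_ball[OF sym u V, where w=u and b=0]) (use u in auto)
    moreover obtain iu where iu: "iu < length (vertex_list ?S)" "vertex_list ?S ! iu = u"
    proof -
      have "u \<in> set (vertex_list ?S)" using uS vertex_list(2)[OF Sf] by simp
      then show ?thesis using that unfolding in_set_conv_nth by blast
    qed
    moreover have "(adj_mat E ?S ^\<^sub>m (2 * s)) $$ (iu,iu) = W E ?S (2 * s) u u"
      using adj_pow_W[OF Sf iu(1) iu(1)] iu(2) by simp
    moreover have "(adj_mat E ?S ^\<^sub>m (2 * s)) $$ (iu,iu) \<le> lambda1 (adj_mat E ?S) ^ (2 * s)"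
      by (rule diag_bound[OF adj_mat_carrier adj_sym adj_nn iu(1) s])
    ultimately show "W E V (2 * s) u u \<le> lambda1 (adj_mat E ?S) ^ (2 * s)" by linarith
  qed
  finally show ?thesis .
qed

end
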